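(* Let $\Gamma$ be a finite, simple and undirected graph. Then there exists a finite nilpotent group $G$ such that $\Delta_D(G)$ contains $\Gamma$ as an induced subgraph.
   Context: For a finite group $G$, let $M(G)$ denote its Schur multiplier. A Schur cover of $G$ is a group $\tilde{G}$ with a central extension $\{e\}\to M(G)\xrightarrow{\iota}\tilde{G}\xrightarrow{\pi}G\to\{e\}$ such that $\iota(M(G))\subseteq Z(\tilde{G})\cap[\tilde{G},\tilde{G}]$ and $\tilde G$ has maximal order among such extensions. The deep commuting graph $\Delta_D(G)$ is the simple graph with vertex set $G$ in which two distinct vertices are adjacent if and only if their preimages under $\pi$ commute in $\tilde{G}$ (independent of the choice of Schur cover and preimages). *)

theory Defs
  imports "HOL-Algebra.Algebra"
begin

definition group_center :: "('a, 'b) monoid_scheme \<Rightarrow> 'a set" where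
  "group_center G = {z \<in> carrier G. \<forall>x \<in> carrier G. z \<otimes>\<^bsub>G\<^esub> x = x \<otimes>\<^bsub>G\<^esub> z}"

definition commutator_subgroup :: "('a, 'b) monoid_scheme \<Rightarrow> 'a set \<Rightarrow> 'a set \<Rightarrow> 'a set" where
  "commutator_subgroup G A B = generate G
     (\<Union>a \<in> A. \<Union>b \<in> B. {a \<otimes>\<^bsub>G\<^esub> b \<otimes>\<^bsub>G\<^esub> inv\<^bsub>G\<^esub> a \<otimes>\<^bsub>G\<^esub> inv\<^bsub>G\<^esub> b})"

text \<open>Lower central series: gamma_1 = G (index 0 here), gamma_{i+1} = [gamma_i, G].\<close>
fun lower_central :: "('a, 'b) monoid_scheme \<Rightarrow> nat \<Rightarrow> 'a set" where
  "lower_central G 0 = carrier G"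
| "lower_central G (Suc n) = commutator_subgroup G (lower_central G n) (carrier G)"

definition nilpotent_group :: "('a, 'b) monoid_scheme \<Rightarrow> bool" where
  "nilpotent_group G \<longleftrightarrow> group G \<and> (\<exists>n. lower_central G n = {\<one>\<^bsub>G\<^esub>})"

definition stem_extension :: "('h, 'c) monoid_scheme \<Rightarrow> ('g, 'd) monoid_scheme \<Rightarrow> ('h \<Rightarrow> 'g) \<Rightarrow> bool" where
  "stem_extension H G \<pi> \<longleftrightarrow> group H \<and> group G \<and> \<pi> \<in> hom H G \<and> \<pi> ` carrier H = carrier G \<and>
     kernel H G \<pi> \<subseteq> group_center H \<inter> derived H (carrier H)"

definition schur_cover :: "('h, 'c) monoid_scheme \<Rightarrow> ('g, 'd) monoid_scheme \<Rightarrow> ('h \<Rightarrow> 'g) \<Rightarrow> bool" where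
  "schur_cover H G \<pi> \<longleftrightarrow> stem_extension H G \<pi> \<and> finite (carrier H) \<and>
     (\<forall>(H' :: ('h, 'c) monoid_scheme) \<pi>'. stem_extension H' G \<pi>' \<longrightarrow>
        finite (carrier H') \<and> card (carrier H') \<le> card (carrier H))"

text \<open>Adjacency in the deep commuting graph Delta_D(G): distinct x, y whose preimages commute
  in every Schur cover (Schur covers are taken on carrier type nat, which suffices for
  finite groups).\<close>
definition deep_commuting_adj :: "('g, 'd) monoid_scheme \<Rightarrow> 'g \<Rightarrow> 'g \<Rightarrow> bool" where
  "deep_commuting_adj G x y \<longleftrightarrow> x \<in> carrier G \<and> y \<in> carrier G \<and> x \<noteq> y \<and>
     (\<forall>(H :: nat monoid) \<pi>. schur_cover H G \<pi> \<longrightarrow>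
        (\<forall>a \<in> carrier H. \<forall>b \<in> carrier H. \<pi> a = x \<longrightarrow> \<pi> b = y \<longrightarrow>
            a \<otimes>\<^bsub>H\<^esub> b = b \<otimes>\<^bsub>H\<^esub> a))"

definition finite_simple_graph :: "'v set \<Rightarrow> ('v \<Rightarrow> 'v \<Rightarrow> bool) \<Rightarrow> bool" where
  "finite_simple_graph V E \<longleftrightarrow> finite V \<and> (\<forall>u \<in> V. \<forall>v \<in> V. E u v \<longrightarrow> E v u) \<and> (\<forall>v \<in> V. \<not> E v v)"

definition induced_subgraph_embedding ::
  "'v set \<Rightarrow> ('v \<Rightarrow> 'v \<Rightarrow> bool) \<Rightarrow> 'w set \<Rightarrow> ('w \<Rightarrow> 'w \<Rightarrow> bool) \<Rightarrow> ('v \<Rightarrow> 'w) \<Rightarrow> bool" where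
  "induced_subgraph_embedding V E W A f \<longleftrightarrow> inj_on f V \<and> f ` V \<subseteq> W \<and>
     (\<forall>u \<in> V. \<forall>v \<in> V. u \<noteq> v \<longrightarrow> (E u v \<longleftrightarrow> A (f u) (f v)))"

end

theory Submission
  imports Defs "HOL-Library.Countable" "HOL-Number_Theory.Cong" "HOL-Computational_Algebra.Primes"
begin

definition cm :: "('a, 'b) monoid_scheme \<Rightarrow> 'a \<Rightarrow> 'a \<Rightarrow> 'a" where
  "cm G x y = x \<otimes>\<^bsub>G\<^esub> y \<otimes>\<^bsub>G\<^esub> inv\<^bsub>G\<^esub> x \<otimes>\<^bsub>G\<^esub> inv\<^bsub>G\<^esub> y"

context group begin

lemma inv_cancel_l[simp]: "x \<in> carrier G \<Longrightarrow> y \<in> carrier G \<Longrightarrow> inv x \<otimes> (x \<otimes> y) = y"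
  by (simp add: m_assoc[symmetric])
lemma inv_cancel_l2[simp]: "x \<in> carrier G \<Longrightarrow> y \<in> carrier G \<Longrightarrow> x \<otimes> (inv x \<otimes> y) = y"
  by (simp add: m_assoc[symmetric])

lemma cm_closed[simp]: "x \<in> carrier G \<Longrightarrow> y \<in> carrier G \<Longrightarrow> cm G x y \<in> carrier G"
  by (simp add: cm_def)

lemma cm_conj: "x \<in> carrier G \<Longrightarrow> y \<in> carrier G \<Longrightarrow> x \<otimes> y \<otimes> inv x = cm G x y \<otimes> y"
  by (simp add: cm_def m_assoc)

lemma cm_swap: "x \<in> carrier G \<Longrightarrow> y \<in> carrier G \<Longrightarrow> x \<otimes> y = cm G x y \<otimes> (y \<otimes> x)"
  by (simp add: cm_def m_assoc)

lemma cm_one_iff: "x \<in> carrier G \<Longrightarrow> y \<in> carrier G \<Longrightarrow> cm G x y = \<one> \<longleftrightarrow> x \<otimes> y = y \<otimes> x"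
  by (metis cm_swap cm_closed l_one m_closed r_cancel_one)

lemma center_one: "\<one> \<in> group_center G"
  by (simp add: group_center_def)

lemma center_carrier: "a \<in> group_center G \<Longrightarrow> a \<in> carrier G"
  by (simp add: group_center_def)

lemma center_comm: "a \<in> group_center G \<Longrightarrow> x \<in> carrier G \<Longrightarrow> a \<otimes> x = x \<otimes> a"
  by (simp add: group_center_def)

lemma center_mult: "a \<in> group_center G \<Longrightarrow> b \<in> group_center G \<Longrightarrow> a \<otimes> b \<in> group_center G"
proof -
  assume a: "a \<in> group_center G" and b: "b \<in> group_center G"
  have c: "a \<in> carrier G" "b \<in> carrier G" using a b center_carrier by auto
  { fix x assume x: "x \<in> carrier G"
    have "a \<otimes> b \<otimes> x = a \<otimes> (x \<otimes> b)" using c x center_comm[OF b x] by (simp add: m_assoc)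
    also have "\<dots> = x \<otimes> (a \<otimes> b)" using c x center_comm[OF a x] by (simp add: m_assoc[symmetric])
    finally have "a \<otimes> b \<otimes> x = x \<otimes> (a \<otimes> b)" . }
  thus ?thesis using c by (simp add: group_center_def)
qed

lemma center_inv: "a \<in> group_center G \<Longrightarrow> inv a \<in> group_center G"
proof -
  assume a: "a \<in> group_center G"
  have c: "a \<in> carrier G" using a center_carrier by auto
  { fix x assume x: "x \<in> carrier G"
    have "a \<otimes> (x \<otimes> inv a) = (a \<otimes> x) \<otimes> inv a" using c x by (simp add: m_assoc)
    also have "\<dots> = x" using c x center_comm[OF a x] by (simp add: m_assoc)
    finally have "a \<otimes> (inv a \<otimes> x) = a \<otimes> (x \<otimes> inv a)" using c x by simp
    hence "inv a \<otimes> x = x \<otimes> inv a" using c x by (metis inv_closed m_closed l_cancel) }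
  thus ?thesis using c by (simp add: group_center_def)
qed

lemma center_pow: "a \<in> group_center G \<Longrightarrow> a [^] (n::nat) \<in> group_center G"
  by (induct n) (auto simp: center_one center_mult)

lemma center_subgroup: "subgroup (group_center G) G"
  by (rule subgroupI) (use center_one in \<open>auto simp: center_carrier center_mult center_inv\<close>)

lemma cm_central_left:
  assumes "x \<in> carrier G" "y \<in> carrier G" "k \<in> group_center G"
  shows "cm G (x \<otimes> k) y = cm G x y"
proof -
  have k: "k \<in> carrier G" using assms center_carrier by auto
  have "cm G (x \<otimes> k) y = x \<otimes> (k \<otimes> y) \<otimes> (inv k \<otimes> inv x) \<otimes> inv y"
    using assms k by (simp add: cm_def inv_mult_group m_assoc)
  also have "k \<otimes> y = y \<otimes> k" using center_comm[OF assms(3)] assms by simp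
  also have "x \<otimes> (y \<otimes> k) \<otimes> (inv k \<otimes> inv x) \<otimes> inv y = x \<otimes> y \<otimes> (k \<otimes> (inv k \<otimes> inv x)) \<otimes> inv y"
    using assms k by (simp add: m_assoc)
  also have "\<dots> = cm G x y" using assms k by (simp add: cm_def)
  finally show ?thesis .
qed

lemma cm_central_right:
  assumes "x \<in> carrier G" "y \<in> carrier G" "k \<in> group_center G"
  shows "cm G x (y \<otimes> k) = cm G x y"
proof -
  have k: "k \<in> carrier G" using assms center_carrier by auto
  have "cm G x (y \<otimes> k) = x \<otimes> y \<otimes> (k \<otimes> inv x) \<otimes> (inv k \<otimes> inv y)"
    using assms k by (simp add: cm_def inv_mult_group m_assoc)
  also have "k \<otimes> inv x = inv x \<otimes> k" using center_comm[OF assms(3)] assms by simp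
  also have "x \<otimes> y \<otimes> (inv x \<otimes> k) \<otimes> (inv k \<otimes> inv y) = x \<otimes> y \<otimes> inv x \<otimes> (k \<otimes> (inv k \<otimes> inv y))"
    using assms k by (simp add: m_assoc)
  also have "\<dots> = cm G x y" using assms k by (simp add: cm_def)
  finally show ?thesis .
qed

lemma conj_pow:
  assumes "a \<in> carrier G" "x \<in> carrier G"
  shows "a \<otimes> x [^] (n::nat) \<otimes> inv a = (a \<otimes> x \<otimes> inv a) [^] n"
proof (induct n)
  case 0 then show ?case using assms by simp
next
  case (Suc n)
  have "a \<otimes> x [^] Suc n \<otimes> inv a = (a \<otimes> x [^] n \<otimes> inv a) \<otimes> (a \<otimes> x \<otimes> inv a)"
    using assms by (simp add: m_assoc)
  then show ?case using Suc by simp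
qed


lemma comm_inv_left:
  assumes "h \<in> carrier G" "s \<in> carrier G" "h \<otimes> s = s \<otimes> h"
  shows "inv h \<otimes> s = s \<otimes> inv h"
proof -
  have "inv h \<otimes> s = inv h \<otimes> s \<otimes> (h \<otimes> inv h)" using assms by simp
  also have "\<dots> = inv h \<otimes> (h \<otimes> s) \<otimes> inv h" using assms by (simp add: m_assoc)
  also have "\<dots> = s \<otimes> inv h" using assms(1,2) by simp
  finally show ?thesis .
qed

lemma pow_mod_exp:
  assumes "s \<in> carrier G" "s [^] e = \<one>"
  shows "s [^] (k::nat) = s [^] (k mod e)"
proof -
  have "s [^] k = s [^] (e * (k div e) + k mod e)" by (metis div_mult_mod_eq mult.commute)
  also have "\<dots> = (s [^] e) [^] (k div e) \<otimes> s [^] (k mod e)"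
    by (simp only: nat_pow_pow[OF assms(1)] nat_pow_mult[OF assms(1)])
  also have "\<dots> = s [^] (k mod e)" using assms by simp
  finally show ?thesis .
qed

lemma comm_generate:
  assumes "s \<in> carrier G" "S \<subseteq> carrier G" "\<forall>t\<in>S. t \<otimes> s = s \<otimes> t"
    and "x \<in> generate G S"
  shows "x \<otimes> s = s \<otimes> x"
  using assms(4)
proof (induct x rule: generate.induct)
  case one then show ?case using assms by simp
next
  case (incl h) then show ?case using assms by auto
next
  case (inv h) then show ?case using assms comm_inv_left[of h s] by auto
next
  case (eng h1 h2)
  have c: "h1 \<in> carrier G" "h2 \<in> carrier G" using eng assms generate_in_carrier by auto
  have "h1 \<otimes> h2 \<otimes> s = h1 \<otimes> (s \<otimes> h2)" using eng c assms by (simp add: m_assoc)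
  also have "\<dots> = s \<otimes> (h1 \<otimes> h2)" using eng c assms by (simp add: m_assoc[symmetric])
  finally show ?case .
qed

lemma gen_card_bound:
  assumes "finite S" "S \<subseteq> carrier G" "\<forall>s\<in>S. \<forall>t\<in>S. s \<otimes> t = t \<otimes> s"
    "\<forall>s\<in>S. s [^] e = \<one>" "e > 0"
  shows "finite (generate G S) \<and> card (generate G S) \<le> e ^ card S"
  using assms(1-4)
proof (induct S rule: finite_induct)
  case empty then show ?case by (simp add: generate_empty)
next
  case (insert s S)
  have s: "s \<in> carrier G" "s [^] e = \<one>" using insert.prems by auto
  have S: "S \<subseteq> carrier G" using insert.prems by auto
  have c2: "\<forall>s\<in>S. \<forall>t\<in>S. s \<otimes> t = t \<otimes> s" using insert.prems(2) by blast
  have p2: "\<forall>s\<in>S. s [^] e = \<one>" using insert.prems(3) by blast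
  have IH: "finite (generate G S) \<and> card (generate G S) \<le> e ^ card S" using insert.hyps(3)[OF S c2 p2] .
  have cs: "\<forall>t\<in>S. t \<otimes> s = s \<otimes> t" using insert.prems(2) by blast
  have gS: "generate G S \<subseteq> carrier G" using S generate_incl by auto
  define R where "R = (\<lambda>(k,x). s [^] (k::nat) \<otimes> x) ` ({..<e} \<times> generate G S)"
  have memR: "s [^] k \<otimes> x \<in> R" if "k < e" "x \<in> generate G S" for k x
    using that unfolding R_def by (auto intro!: image_eqI[of _ _ "(k,x)"])
  have sub: "generate G (insert s S) \<subseteq> R"
  proof
    fix h assume "h \<in> generate G (insert s S)"
    then show "h \<in> R"
    proof (induct h rule: generate.induct)
      case one then show ?case using memR[of 0 \<one>] assms(5) generate.one[of G S] by simp
    next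
      case (incl h)
      show ?case
      proof (cases "h = s")
        case True
        have "s [^] (1 mod e) \<otimes> \<one> = s" using s pow_mod_exp[of s e 1] by simp
        then show ?thesis using True memR[of "1 mod e" \<one>] assms(5) generate.one[of G S] by simp
      next
        case False
        then have "h \<in> S" using incl by auto
        then show ?thesis using memR[of 0 h] assms(5) generate.incl[of h S G] S by auto
      qed
    next
      case (inv h)
      show ?case
      proof (cases "h = s")
        case True
        have "s [^] (e - 1) \<otimes> s = s [^] Suc (e - 1)" by simp
        also have "Suc (e - 1) = e" using assms(5) by simp
        finally have "s [^] (e - 1) \<otimes> s = s [^] e" .
        then have "inv s = s [^] (e - 1)" using s by (simp add: inv_equality)
        then have "inv s = s [^] (e - 1) \<otimes> \<one>" using s by simp
        then show ?thesis using True memR[of "e - 1" \<one>] assms(5) generate.one[of G S] by simp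
      next
        case False
        then have "h \<in> S" using inv by auto
        then show ?thesis using memR[of 0 "inv h"] assms(5) generate.inv[of h S G] S by auto
      qed
    next
      case (eng h1 h2)
      obtain k1 x1 where 1: "k1 < e" "x1 \<in> generate G S" "h1 = s [^] k1 \<otimes> x1"
        using eng(2) unfolding R_def by auto
      obtain k2 x2 where 2: "k2 < e" "x2 \<in> generate G S" "h2 = s [^] k2 \<otimes> x2"
        using eng(4) unfolding R_def by auto
      have x: "x1 \<in> carrier G" "x2 \<in> carrier G" using 1 2 gS by auto
      have cx: "x1 \<otimes> s = s \<otimes> x1" using comm_generate[OF s(1) S cs 1(2)] .
      have cx2: "s [^] k2 \<otimes> x1 = x1 \<otimes> s [^] k2"
        using group_commutes_pow[of s x1 k2] cx s x by simp
      have "h1 \<otimes> h2 = s [^] k1 \<otimes> (x1 \<otimes> s [^] k2) \<otimes> x2"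
        using 1 2 s x by (simp add: m_assoc)
      also have "\<dots> = s [^] k1 \<otimes> (s [^] k2 \<otimes> x1) \<otimes> x2" using cx2 by simp
      also have "\<dots> = (s [^] k1 \<otimes> s [^] k2) \<otimes> (x1 \<otimes> x2)"
        using s x by (simp add: m_assoc)
      also have "\<dots> = s [^] (k1 + k2) \<otimes> (x1 \<otimes> x2)"
        using s by (simp add: nat_pow_mult)
      also have "\<dots> = s [^] ((k1 + k2) mod e) \<otimes> (x1 \<otimes> x2)"
        using pow_mod_exp[OF s] by simp
      moreover have "s [^] ((k1 + k2) mod e) \<otimes> (x1 \<otimes> x2) \<in> R"
        using memR[of "(k1 + k2) mod e" "x1 \<otimes> x2"] assms(5) 1(2) 2(2) generate.eng[of x1 G S x2]
        by simp
      ultimately show ?case by simp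
    qed
  qed
  have fR: "finite R" using IH unfolding R_def by auto
  have "card R \<le> card ({..<e} \<times> generate G S)" unfolding R_def by (rule card_image_le) (use IH in auto)
  also have "\<dots> = e * card (generate G S)" by (simp add: card_cartesian_product)
  also have "\<dots> \<le> e * e ^ card S" using IH by simp
  also have "\<dots> = e ^ card (insert s S)" using insert.hyps(1,2) by simp
  finally show ?case using sub fR card_mono[OF fR sub] finite_subset[OF sub fR] by simp
qed

end

context group begin

lemma cm_one_right[simp]: "c \<in> carrier G \<Longrightarrow> cm G c \<one> = \<one>"
  by (simp add: cm_def)
lemma cm_one_left[simp]: "c \<in> carrier G \<Longrightarrow> cm G \<one> c = \<one>"
  by (simp add: cm_def)

lemma cm_center_right: "c \<in> carrier G \<Longrightarrow> z \<in> group_center G \<Longrightarrow> cm G c z = \<one>"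
  using cm_one_iff center_comm center_carrier by metis

lemma cm_center_left: "c \<in> carrier G \<Longrightarrow> z \<in> group_center G \<Longrightarrow> cm G z c = \<one>"
  using cm_one_iff center_comm center_carrier by metis

lemma cm_hom_right:
  assumes c: "c \<in> carrier G" and h: "h \<in> carrier G" "h' \<in> carrier G"
    and t: "cm G c h \<in> group_center G" "cm G c h' \<in> group_center G"
  shows "cm G c (h \<otimes> h') = cm G c h \<otimes> cm G c h'"
proof -
  have "cm G c (h \<otimes> h') = (c \<otimes> h \<otimes> inv c) \<otimes> (c \<otimes> h' \<otimes> inv c \<otimes> inv h') \<otimes> inv h"
    using c h by (simp add: cm_def m_assoc inv_mult_group)
  also have "\<dots> = (c \<otimes> h \<otimes> inv c) \<otimes> cm G c h' \<otimes> inv h" by (simp add: cm_def)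
  also have "\<dots> = (cm G c h' \<otimes> (c \<otimes> h \<otimes> inv c)) \<otimes> inv h"
    using c h center_comm[OF t(2), of "c \<otimes> h \<otimes> inv c"] by simp
  also have "\<dots> = cm G c h' \<otimes> ((c \<otimes> h \<otimes> inv c) \<otimes> inv h)"
    using c h center_carrier[OF t(2)] by (simp only: m_assoc inv_closed m_closed)
  also have "\<dots> = cm G c h' \<otimes> cm G c h" by (simp add: cm_def)
  also have "\<dots> = cm G c h \<otimes> cm G c h'" using center_comm[OF t(2)] c h by simp
  finally show ?thesis .
qed

lemma cm_inv_right:
  assumes c: "c \<in> carrier G" and h: "h \<in> carrier G" and T: "\<forall>x\<in>carrier G. cm G c x \<in> group_center G"
  shows "cm G c (inv h) = inv (cm G c h)"
proof -
  have "cm G c (h \<otimes> inv h) = cm G c h \<otimes> cm G c (inv h)"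
    by (rule cm_hom_right) (use c h T in auto)
  moreover have "cm G c (h \<otimes> inv h) = \<one>" using c h by simp
  ultimately have e: "cm G c h \<otimes> cm G c (inv h) = \<one>" by simp
  have "cm G c (inv h) \<otimes> cm G c h = \<one>" by (rule inv_comm[OF e]) (use c h in auto)
  then have "inv (cm G c h) = cm G c (inv h)" by (rule inv_equality) (use c h in auto)
  then show ?thesis by simp
qed

lemma cm_pow_right:
  assumes c: "c \<in> carrier G" and h: "h \<in> carrier G" and T: "\<forall>x\<in>carrier G. cm G c x \<in> group_center G"
  shows "cm G c (h [^] (n::nat)) = (cm G c h) [^] n"
proof (induct n)
  case 0 then show ?case using c by simp
next
  case (Suc n)
  have "cm G c (h [^] Suc n) = cm G c (h [^] n \<otimes> h)" by simp
  also have "\<dots> = cm G c (h [^] n) \<otimes> cm G c h" using cm_hom_right c h T by simp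
  finally show ?case using Suc by simp
qed

lemma cm_cm_trivial:
  assumes c: "c \<in> carrier G" and T: "\<forall>x\<in>carrier G. cm G c x \<in> group_center G"
    and ab: "a \<in> carrier G" "b \<in> carrier G"
  shows "cm G c (cm G a b) = \<one>"
proof -
  have ta: "cm G c a \<in> group_center G" and tb: "cm G c b \<in> group_center G" using T ab by auto
  have ca: "cm G c a \<in> carrier G" "cm G c b \<in> carrier G" using c ab by auto
  have hom2: "cm G c (h \<otimes> h') = cm G c h \<otimes> cm G c h'" if "h \<in> carrier G" "h' \<in> carrier G" for h h'
    by (rule cm_hom_right) (use c T that in auto)
  have "cm G c (cm G a b) = cm G c (a \<otimes> b \<otimes> inv a) \<otimes> cm G c (inv b)"
    unfolding cm_def[of G a b] using hom2 ab by simp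
  also have "cm G c (a \<otimes> b \<otimes> inv a) = cm G c a \<otimes> cm G c b \<otimes> cm G c (inv a)"
    using hom2 ab by simp
  also have "\<dots> \<otimes> cm G c (inv b) = cm G c a \<otimes> cm G c b \<otimes> inv (cm G c a) \<otimes> inv (cm G c b)"
    using cm_inv_right[OF c _ T] ab by simp
  also have "\<dots> = cm G (cm G c a) (cm G c b)" by (simp add: cm_def)
  also have "\<dots> = \<one>" using cm_center_left[OF ca(2) ta] .
  finally show ?thesis .
qed

lemma cm_mult_left:
  assumes "a \<in> carrier G" "y \<in> carrier G" "b \<in> carrier G"
  shows "cm G (a \<otimes> y) b = a \<otimes> cm G y b \<otimes> inv a \<otimes> cm G a b"
  using assms by (simp add: cm_def m_assoc inv_mult_group)

lemma comm_order_bound: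
  assumes a: "a \<in> carrier G" and b: "b \<in> carrier G"
    and T: "\<forall>x\<in>carrier G. cm G (cm G a b) x \<in> group_center G"
    and an: "a [^] (n::nat) \<in> group_center G"
  shows "(cm G a b) [^] (n * n) = \<one>"
proof -
  define c where "c = cm G a b"
  have c: "c \<in> carrier G" using a b c_def by simp
  have Tc: "\<forall>x\<in>carrier G. cm G c x \<in> group_center G" using T c_def by simp
  define d where "d = inv (cm G c a)"
  have dz: "d \<in> group_center G" using Tc a d_def center_inv by simp
  have d: "d \<in> carrier G" using dz center_carrier by simp
  have "(cm G c a) [^] n = cm G c (a [^] n)" using cm_pow_right[OF c a Tc] by simp
  also have "\<dots> = \<one>" using cm_center_right[OF c an] .
  finally have "(cm G c a) [^] n = \<one>" .
  then have dn: "d [^] n = \<one>" using d_def nat_pow_inv c a by simp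
  have dconj: "a \<otimes> c \<otimes> inv a = d \<otimes> c"
  proof -
    have "d = cm G a c" using a c unfolding d_def cm_def by (simp add: inv_mult_group m_assoc)
    then show ?thesis using cm_conj[OF a c] by simp
  qed
  have P: "\<exists>z\<in>group_center G. z [^] n = \<one> \<and> cm G (a [^] k) b = c [^] k \<otimes> z" for k :: nat
  proof (induct k)
    case 0 then show ?case using b center_one by (intro bexI[of _ \<one>]) auto
  next
    case (Suc k)
    then obtain z where z: "z \<in> group_center G" "z [^] n = \<one>" "cm G (a [^] k) b = c [^] k \<otimes> z" by blast
    have zc: "z \<in> carrier G" using z center_carrier by simp
    have "cm G (a [^] Suc k) b = cm G (a \<otimes> a [^] k) b" by (subst nat_pow_Suc2[OF a]) (rule refl)
    also have "\<dots> = a \<otimes> (c [^] k \<otimes> z) \<otimes> inv a \<otimes> c"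
      using cm_mult_left[of a "a [^] k" b] a b z c_def by simp
    also have "\<dots> = (a \<otimes> c [^] k \<otimes> inv a) \<otimes> z \<otimes> c"
    proof -
      have "a \<otimes> (c [^] k \<otimes> z) \<otimes> inv a = a \<otimes> c [^] k \<otimes> (z \<otimes> inv a)" using a c zc by (simp add: m_assoc)
      also have "z \<otimes> inv a = inv a \<otimes> z" using center_comm[OF z(1)] a by simp
      finally show ?thesis using a c zc by (simp add: m_assoc)
    qed
    also have "\<dots> = (d \<otimes> c) [^] k \<otimes> z \<otimes> c" using conj_pow[OF a, of c k] c dconj by simp
    also have "\<dots> = d [^] k \<otimes> c [^] k \<otimes> z \<otimes> c"
      using pow_mult_distrib[of d c k] center_comm[OF dz c] d c by simp
    also have "\<dots> = c [^] k \<otimes> c \<otimes> (d [^] k \<otimes> z)"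
    proof -
      have dk: "d [^] k \<in> group_center G" using center_pow dz by simp
      have "d [^] k \<otimes> c [^] k \<otimes> z \<otimes> c = d [^] k \<otimes> (c [^] k \<otimes> (z \<otimes> c))" using d c zc by (simp add: m_assoc)
      also have "z \<otimes> c = c \<otimes> z" using center_comm[OF z(1) c] .
      also have "d [^] k \<otimes> (c [^] k \<otimes> (c \<otimes> z)) = (c [^] k \<otimes> c) \<otimes> z \<otimes> d [^] k"
        using center_comm[OF dk, of "c [^] k \<otimes> c \<otimes> z"] c zc by (simp add: m_assoc)
      also have "\<dots> = c [^] k \<otimes> c \<otimes> (d [^] k \<otimes> z)"
        using center_comm[OF dk zc] c zc d by (simp add: m_assoc)
      finally show ?thesis .
    qed
    also have "\<dots> = c [^] Suc k \<otimes> (d [^] k \<otimes> z)" by simp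
    finally have eq: "cm G (a [^] Suc k) b = c [^] Suc k \<otimes> (d [^] k \<otimes> z)" .
    have z1: "d [^] k \<otimes> z \<in> group_center G" using center_mult center_pow dz z by simp
    have "(d [^] k \<otimes> z) [^] n = (d [^] k) [^] n \<otimes> z [^] n"
      using pow_mult_distrib[of "d [^] k" z n] center_comm[OF z(1), of "d [^] k"] d zc by simp
    also have "\<dots> = \<one>" using z(2) dn d by (simp add: nat_pow_pow mult.commute[of k n] nat_pow_pow[symmetric])
    finally show ?case using eq z1 by blast
  qed
  obtain z where z: "z \<in> group_center G" "z [^] n = \<one>" "cm G (a [^] n) b = c [^] n \<otimes> z" using P by blast
  have zc: "z \<in> carrier G" using z center_carrier by simp
  have "c [^] n \<otimes> z = \<one>" using z(3) cm_center_left[OF b an] by simp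
  then have "c [^] n = inv z" using zc c by (metis inv_equality inv_comm nat_pow_closed)
  then have "(c [^] n) [^] n = \<one>" using z(2) zc by (simp add: nat_pow_inv)
  then show ?thesis using c c_def by (simp add: nat_pow_pow)
qed

end

lemma (in group) cm_inv_swap: "a \<in> carrier G \<Longrightarrow> b \<in> carrier G \<Longrightarrow> cm G b a = inv (cm G a b)"
  by (simp add: cm_def inv_mult_group m_assoc)

lemma (in group) stem_bound:
  fixes Q :: "('g, 'd) monoid_scheme" and \<pi> :: "'a \<Rightarrow> 'g"
  assumes Q: "group Q" and hom: "\<pi> \<in> hom G Q" and surj: "\<pi> ` carrier G = carrier Q"
    and Kc: "kernel G Q \<pi> \<subseteq> group_center G" and Kd: "kernel G Q \<pi> \<subseteq> derived G (carrier G)"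
    and fin: "finite (carrier Q)"
    and cl2: "\<forall>x\<in>carrier Q. \<forall>y\<in>carrier Q. \<forall>z\<in>carrier Q. cm Q (cm Q x y) z = \<one>\<^bsub>Q\<^esub>"
  shows "finite (carrier G) \<and> card (carrier G) \<le> card (carrier Q) * (card (carrier Q) * card (carrier Q)) ^ (card (carrier Q) * card (carrier Q))"
proof -
  interpret Q: group Q by fact
  have gh: "group_hom G Q \<pi>" using Q hom by (simp add: group_hom_def group_hom_axioms_def is_group)
  have pc: "\<pi> x \<in> carrier Q" if "x \<in> carrier G" for x using hom that by (auto simp: hom_def)
  have pm: "\<pi> (x \<otimes> y) = \<pi> x \<otimes>\<^bsub>Q\<^esub> \<pi> y" if "x \<in> carrier G" "y \<in> carrier G" for x y
    using hom_mult[OF hom that] .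
  have pinv: "\<pi> (inv x) = inv\<^bsub>Q\<^esub> (\<pi> x)" if "x \<in> carrier G" for x
    using group_hom.hom_inv[OF gh that] .
  have pcm: "\<pi> (cm G x y) = cm Q (\<pi> x) (\<pi> y)" if "x \<in> carrier G" "y \<in> carrier G" for x y
    using that by (simp add: cm_def pm pinv)
  have Kmem: "x \<in> kernel G Q \<pi> \<longleftrightarrow> x \<in> carrier G \<and> \<pi> x = \<one>\<^bsub>Q\<^esub>" for x
    by (simp add: kernel_def)
  define n where "n = card (carrier Q)"
  have npos: "n > 0" using fin n_def card_gt_0_iff Q.one_closed by blast
  have T: "\<forall>x\<in>carrier G. cm G (cm G a b) x \<in> group_center G" if "a \<in> carrier G" "b \<in> carrier G" for a b
  proof
    fix x assume x: "x \<in> carrier G"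
    have "\<pi> (cm G (cm G a b) x) = \<one>\<^bsub>Q\<^esub>" using that x cl2 pc by (simp add: pcm)
    then show "cm G (cm G a b) x \<in> group_center G" using Kc Kmem that x by auto
  qed
  have an: "a [^] n \<in> group_center G" if "a \<in> carrier G" for a
  proof -
    have "\<pi> (a [^] n) = (\<pi> a) [^]\<^bsub>Q\<^esub> n" using group_hom.hom_nat_pow[OF gh that] .
    also have "\<dots> = \<one>\<^bsub>Q\<^esub>" using Q.pow_order_eq_1[OF pc[OF that]] n_def by (simp add: order_def)
    finally show ?thesis using Kc Kmem that by auto
  qed
  define L where "L = inv_into (carrier G) \<pi>"
  have Lc: "L q \<in> carrier G" "\<pi> (L q) = q" if "q \<in> carrier Q" for q
    using that surj unfolding L_def by (auto intro: inv_into_into f_inv_into_f)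
  have dec: "a = L (\<pi> a) \<otimes> (inv (L (\<pi> a)) \<otimes> a) \<and> inv (L (\<pi> a)) \<otimes> a \<in> kernel G Q \<pi>"
    if a: "a \<in> carrier G" for a
  proof
    show "a = L (\<pi> a) \<otimes> (inv (L (\<pi> a)) \<otimes> a)" using Lc[OF pc[OF a]] a by simp
    have "\<pi> (inv (L (\<pi> a)) \<otimes> a) = \<one>\<^bsub>Q\<^esub>"
      using Lc[OF pc[OF a]] a pc by (simp add: pm pinv)
    then show "inv (L (\<pi> a)) \<otimes> a \<in> kernel G Q \<pi>" using Kmem Lc[OF pc[OF a]] a by simp
  qed
  define Cm where "Cm = derived_set G (carrier G)"
  have Cm_iff: "x \<in> Cm \<longleftrightarrow> (\<exists>a\<in>carrier G. \<exists>b\<in>carrier G. x = cm G a b)" for x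
    unfolding Cm_def cm_def by auto
  have Cm_sub: "Cm \<subseteq> (\<lambda>(x,y). cm G (L x) (L y)) ` (carrier Q \<times> carrier Q)"
  proof
    fix x assume "x \<in> Cm"
    then obtain a b where ab: "a \<in> carrier G" "b \<in> carrier G" "x = cm G a b" using Cm_iff by blast
    have ka: "inv (L (\<pi> a)) \<otimes> a \<in> group_center G" using dec[OF ab(1)] Kc by auto
    have kb: "inv (L (\<pi> b)) \<otimes> b \<in> group_center G" using dec[OF ab(2)] Kc by auto
    have "cm G a b = cm G (L (\<pi> a) \<otimes> (inv (L (\<pi> a)) \<otimes> a)) (L (\<pi> b) \<otimes> (inv (L (\<pi> b)) \<otimes> b))"
      using dec ab by simp
    also have "\<dots> = cm G (L (\<pi> a)) (L (\<pi> b) \<otimes> (inv (L (\<pi> b)) \<otimes> b))"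
      by (rule cm_central_left) (use ka Lc pc ab center_carrier[OF kb] in auto)
    also have "\<dots> = cm G (L (\<pi> a)) (L (\<pi> b))"
      by (rule cm_central_right) (use kb Lc pc ab in auto)
    finally show "x \<in> (\<lambda>(x,y). cm G (L x) (L y)) ` (carrier Q \<times> carrier Q)"
      using ab pc by force
  qed
  have finCm: "finite Cm" using Cm_sub fin finite_subset by blast
  have cardCm: "card Cm \<le> n * n"
  proof -
    have "card Cm \<le> card ((\<lambda>(x,y). cm G (L x) (L y)) ` (carrier Q \<times> carrier Q))"
      using Cm_sub fin by (intro card_mono) auto
    also have "\<dots> \<le> card (carrier Q \<times> carrier Q)" by (rule card_image_le) (use fin in auto)
    finally show ?thesis by (simp add: card_cartesian_product n_def)
  qed
  have CmC: "Cm \<subseteq> carrier G" using Cm_iff by auto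
  have comm: "\<forall>s\<in>Cm. \<forall>t\<in>Cm. s \<otimes> t = t \<otimes> s"
  proof (intro ballI)
    fix s t assume "s \<in> Cm" "t \<in> Cm"
    then obtain a b a' b' where ab: "a \<in> carrier G" "b \<in> carrier G" "s = cm G a b"
      and ab': "a' \<in> carrier G" "b' \<in> carrier G" "t = cm G a' b'" using Cm_iff by metis
    have "cm G s t = \<one>" using cm_cm_trivial[of s a' b'] T[OF ab(1,2)] ab ab' by simp
    then show "s \<otimes> t = t \<otimes> s" using cm_one_iff ab ab' by simp
  qed
  have pw: "\<forall>s\<in>Cm. s [^] (n * n) = \<one>"
  proof
    fix s assume "s \<in> Cm"
    then obtain a b where ab: "a \<in> carrier G" "b \<in> carrier G" "s = cm G a b" using Cm_iff by blast
    show "s [^] (n * n) = \<one>" using comm_order_bound[OF ab(1,2) T[OF ab(1,2)] an[OF ab(1)]] ab by simp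
  qed
  have D: "finite (generate G Cm) \<and> card (generate G Cm) \<le> (n * n) ^ card Cm"
    using gen_card_bound[OF finCm CmC comm pw] npos by simp
  have Dcard: "card (generate G Cm) \<le> (n * n) ^ (n * n)"
  proof -
    have "(n * n) ^ card Cm \<le> (n * n) ^ (n * n)" using cardCm npos by (intro power_increasing) auto
    then show ?thesis using D by linarith
  qed
  have Deq: "derived G (carrier G) = generate G Cm" by (simp add: derived_def Cm_def)
  have sub: "carrier G \<subseteq> (\<lambda>(q,d). L q \<otimes> d) ` (carrier Q \<times> generate G Cm)"
  proof
    fix a assume a: "a \<in> carrier G"
    have "inv (L (\<pi> a)) \<otimes> a \<in> generate G Cm" using dec[OF a] Kd Deq by auto
    then show "a \<in> (\<lambda>(q,d). L q \<otimes> d) ` (carrier Q \<times> generate G Cm)"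
      using dec[OF a] pc[OF a] by (auto intro!: image_eqI[of _ _ "(\<pi> a, inv (L (\<pi> a)) \<otimes> a)"])
  qed
  have finR: "finite ((\<lambda>(q,d). L q \<otimes> d) ` (carrier Q \<times> generate G Cm))" using fin D by auto
  have c1: "card (carrier G) \<le> card ((\<lambda>(q,d). L q \<otimes> d) ` (carrier Q \<times> generate G Cm))"
    by (rule card_mono[OF finR sub])
  have c2: "card ((\<lambda>(q,d). L q \<otimes> d) ` (carrier Q \<times> generate G Cm)) \<le> card (carrier Q \<times> generate G Cm)"
    by (rule card_image_le) (use fin D in blast)
  have c3: "card (carrier Q \<times> generate G Cm) = n * card (generate G Cm)"
    by (simp only: card_cartesian_product n_def)
  have c4: "n * card (generate G Cm) \<le> n * ((n * n) ^ (n * n))"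
    by (rule mult_le_mono2[OF Dcard])
  have "card (carrier G) \<le> n * ((n * n) ^ (n * n))" using c1 c2 c3 c4 by linarith
  moreover have "finite (carrier G)" by (rule finite_subset[OF sub finR])
  ultimately show ?thesis unfolding n_def by blast
qed

lemma (in group) stem_self: "stem_extension G G id"
proof -
  have "kernel G G id = {\<one>}" by (auto simp: kernel_def)
  moreover have "\<one> \<in> derived G (carrier G)" by (simp add: derived_def generate.one)
  ultimately show ?thesis unfolding stem_extension_def
    using is_group center_one by (auto simp: hom_def)
qed

lemma schur_exists:
  fixes G :: "nat monoid"
  assumes grp: "group G" and fin: "finite (carrier G)"
    and cl2: "\<forall>x\<in>carrier G. \<forall>y\<in>carrier G. \<forall>z\<in>carrier G. cm G (cm G x y) z = \<one>\<^bsub>G\<^esub>"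
  shows "\<exists>(H :: nat monoid) \<pi>. schur_cover H G \<pi>"
proof -
  define B where "B = card (carrier G) * (card (carrier G) * card (carrier G)) ^ (card (carrier G) * card (carrier G))"
  have bnd: "finite (carrier H) \<and> card (carrier H) \<le> B" if "stem_extension H G \<pi>" for H :: "nat monoid" and \<pi>
  proof -
    have gH: "group H" using that by (simp add: stem_extension_def)
    show ?thesis unfolding B_def
      by (rule group.stem_bound[OF gH]) (use that grp fin cl2 in \<open>auto simp: stem_extension_def\<close>)
  qed
  define S where "S = {card (carrier H) | (H :: nat monoid) \<pi>. stem_extension H G \<pi>}"
  have "S \<subseteq> {..B}"
  proof
    fix m assume "m \<in> S"
    then obtain H :: "nat monoid" and \<pi> where "stem_extension H G \<pi>" "m = card (carrier H)"
      unfolding S_def by blast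
    then show "m \<in> {..B}" using bnd by auto
  qed
  then have Sfin: "finite S" using finite_subset by blast
  have Sne: "card (carrier G) \<in> S" using group.stem_self[OF grp] unfolding S_def by blast
  have "Max S \<in> S" using Sfin Sne Max_in by blast
  then have "\<exists>(H :: nat monoid) \<pi>. stem_extension H G \<pi> \<and> card (carrier H) = Max S"
    unfolding S_def by (smt (verit) mem_Collect_eq)
  then obtain H :: "nat monoid" and \<pi> where H: "stem_extension H G \<pi>" "card (carrier H) = Max S"
    by blast
  have all: "\<forall>(H' :: nat monoid) \<pi>'. stem_extension H' G \<pi>' \<longrightarrow>
        finite (carrier H') \<and> card (carrier H') \<le> card (carrier H)"
  proof (intro allI impI)
    fix H' :: "nat monoid" and \<pi>' assume st: "stem_extension H' G \<pi>'"
    then have "card (carrier H') \<in> S" unfolding S_def by blast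
    then have "card (carrier H') \<le> Max S" using Sfin by (rule Max_ge[rotated])
    then show "finite (carrier H') \<and> card (carrier H') \<le> card (carrier H)"
      using bnd[OF st] H(2) by simp
  qed
  have "schur_cover H G \<pi>" unfolding schur_cover_def
    using H(1) bnd[OF H(1)] all by blast
  then show ?thesis by blast
qed

lemma nonadj:
  fixes G :: "('g, 'd) monoid_scheme"
  assumes ex: "\<exists>(H :: nat monoid) \<pi>. schur_cover H G \<pi>" and x: "x \<in> carrier G" and y: "y \<in> carrier G"
    and nc: "x \<otimes>\<^bsub>G\<^esub> y \<noteq> y \<otimes>\<^bsub>G\<^esub> x"
  shows "\<not> deep_commuting_adj G x y"
proof
  assume adj: "deep_commuting_adj G x y"
  obtain H :: "nat monoid" and \<pi> where sc: "schur_cover H G \<pi>" using ex by blast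
  then have st: "\<pi> \<in> hom H G" "\<pi> ` carrier H = carrier G"
    by (auto simp: schur_cover_def stem_extension_def)
  obtain a where a: "a \<in> carrier H" "\<pi> a = x" using st x by (metis imageE)
  obtain b where b: "b \<in> carrier H" "\<pi> b = y" using st y by (metis imageE)
  have "a \<otimes>\<^bsub>H\<^esub> b = b \<otimes>\<^bsub>H\<^esub> a" using adj sc a b unfolding deep_commuting_adj_def by blast
  then have "\<pi> (a \<otimes>\<^bsub>H\<^esub> b) = \<pi> (b \<otimes>\<^bsub>H\<^esub> a)" by simp
  then show False using hom_mult[OF st(1)] a b nc by simp
qed

lemma adj:
  fixes G :: "('g, 'd) monoid_scheme"
  assumes grp: "group G" and x: "x \<in> carrier G" and y: "y \<in> carrier G" and ne: "x \<noteq> y"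
    and c: "x \<otimes>\<^bsub>G\<^esub> y = y \<otimes>\<^bsub>G\<^esub> x" and xm: "x [^]\<^bsub>G\<^esub> (m::nat) = \<one>\<^bsub>G\<^esub>"
    and ym: "y [^]\<^bsub>G\<^esub> (m'::nat) = \<one>\<^bsub>G\<^esub>" and cop: "coprime m m'"
  shows "deep_commuting_adj G x y"
  unfolding deep_commuting_adj_def
proof (intro conjI allI impI ballI x y ne)
  fix H :: "nat monoid" and \<pi> a b
  assume sc: "schur_cover H G \<pi>" and a: "a \<in> carrier H" and b: "b \<in> carrier H"
    and pa: "\<pi> a = x" and pb: "\<pi> b = y"
  have H: "group H" and hom: "\<pi> \<in> hom H G" and Kc: "kernel H G \<pi> \<subseteq> group_center H"
    using sc by (auto simp: schur_cover_def stem_extension_def)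
  interpret H: group H by fact
  interpret G: group G by fact
  have gh: "group_hom H G \<pi>" using H grp hom by (simp add: group_hom_def group_hom_axioms_def)
  have pinv: "\<pi> (inv\<^bsub>H\<^esub> u) = inv\<^bsub>G\<^esub> (\<pi> u)" if "u \<in> carrier H" for u
    using group_hom.hom_inv[OF gh that] .
  have ker: "u \<in> group_center H" if "u \<in> carrier H" "\<pi> u = \<one>\<^bsub>G\<^esub>" for u
    using Kc that by (auto simp: kernel_def)
  define k where "k = cm H a b"
  have kc: "k \<in> carrier H" using a b k_def by simp
  have "\<pi> k = cm G x y" using a b pa pb hom_mult[OF hom] pinv k_def by (simp add: cm_def)
  also have "\<dots> = \<one>\<^bsub>G\<^esub>" using G.cm_one_iff x y c by simp
  finally have kz: "k \<in> group_center H" using ker kc by simp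
  have amz: "a [^]\<^bsub>H\<^esub> m \<in> group_center H"
    using ker group_hom.hom_nat_pow[OF gh a] pa xm a by simp
  have bmz: "b [^]\<^bsub>H\<^esub> m' \<in> group_center H"
    using ker group_hom.hom_nat_pow[OF gh b] pb ym b by simp
  have conjz: "g \<otimes>\<^bsub>H\<^esub> z \<otimes>\<^bsub>H\<^esub> inv\<^bsub>H\<^esub> g = z" if "g \<in> carrier H" "z \<in> group_center H" for g z
  proof -
    have zc: "z \<in> carrier H" using H.center_carrier[OF that(2)] .
    have "g \<otimes>\<^bsub>H\<^esub> z \<otimes>\<^bsub>H\<^esub> inv\<^bsub>H\<^esub> g = z \<otimes>\<^bsub>H\<^esub> g \<otimes>\<^bsub>H\<^esub> inv\<^bsub>H\<^esub> g"
      using H.center_comm[OF that(2) that(1)] by simp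
    also have "\<dots> = z" using zc that(1) by (simp add: H.m_assoc)
    finally show ?thesis .
  qed
  have k1: "k [^]\<^bsub>H\<^esub> m' = \<one>\<^bsub>H\<^esub>"
  proof -
    have "b [^]\<^bsub>H\<^esub> m' = a \<otimes>\<^bsub>H\<^esub> b [^]\<^bsub>H\<^esub> m' \<otimes>\<^bsub>H\<^esub> inv\<^bsub>H\<^esub> a" using conjz a bmz by simp
    also have "\<dots> = (k \<otimes>\<^bsub>H\<^esub> b) [^]\<^bsub>H\<^esub> m'" using H.conj_pow[OF a b] H.cm_conj[OF a b] k_def by simp
    also have "\<dots> = k [^]\<^bsub>H\<^esub> m' \<otimes>\<^bsub>H\<^esub> b [^]\<^bsub>H\<^esub> m'"
      using H.pow_mult_distrib[of k b m'] H.center_comm[OF kz b] kc b by simp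
    finally have "b [^]\<^bsub>H\<^esub> m' = k [^]\<^bsub>H\<^esub> m' \<otimes>\<^bsub>H\<^esub> b [^]\<^bsub>H\<^esub> m'" .
    then show ?thesis using kc b by simp
  qed
  have k2: "k [^]\<^bsub>H\<^esub> m = \<one>\<^bsub>H\<^esub>"
  proof -
    have ik: "inv\<^bsub>H\<^esub> k \<in> group_center H" using H.center_inv kz by simp
    have ikc: "inv\<^bsub>H\<^esub> k \<in> carrier H" using kc by simp
    have "a [^]\<^bsub>H\<^esub> m = b \<otimes>\<^bsub>H\<^esub> a [^]\<^bsub>H\<^esub> m \<otimes>\<^bsub>H\<^esub> inv\<^bsub>H\<^esub> b" using conjz b amz by simp
    also have "\<dots> = (inv\<^bsub>H\<^esub> k \<otimes>\<^bsub>H\<^esub> a) [^]\<^bsub>H\<^esub> m"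
      using H.conj_pow[OF b a] H.cm_conj[OF b a] H.cm_inv_swap[OF a b] k_def by simp
    also have "\<dots> = (inv\<^bsub>H\<^esub> k) [^]\<^bsub>H\<^esub> m \<otimes>\<^bsub>H\<^esub> a [^]\<^bsub>H\<^esub> m"
      using H.pow_mult_distrib[of "inv\<^bsub>H\<^esub> k" a m] H.center_comm[OF ik a] ikc a by simp
    finally have "a [^]\<^bsub>H\<^esub> m = (inv\<^bsub>H\<^esub> k) [^]\<^bsub>H\<^esub> m \<otimes>\<^bsub>H\<^esub> a [^]\<^bsub>H\<^esub> m" .
    then have "(inv\<^bsub>H\<^esub> k) [^]\<^bsub>H\<^esub> m = \<one>\<^bsub>H\<^esub>" using ikc a by simp
    then show ?thesis using H.nat_pow_inv[OF kc] kc by simp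
  qed
  have "H.ord k dvd m" "H.ord k dvd m'" using H.pow_eq_id[OF kc] k1 k2 by auto
  then have "H.ord k = 1" using coprime_common_divisor_nat[OF cop] by blast
  then have "k [^]\<^bsub>H\<^esub> (1::nat) = \<one>\<^bsub>H\<^esub>" using H.pow_eq_id[OF kc, of 1] by simp
  then have "k = \<one>\<^bsub>H\<^esub>" using kc by simp
  then show "a \<otimes>\<^bsub>H\<^esub> b = b \<otimes>\<^bsub>H\<^esub> a" using H.cm_one_iff[OF a b] k_def by simp
qed

lemma (in group) class2_nilpotent:
  assumes cl2: "\<forall>x\<in>carrier G. \<forall>y\<in>carrier G. \<forall>z\<in>carrier G. cm G (cm G x y) z = \<one>\<^bsub>G\<^esub>"
  shows "nilpotent_group G"
proof -
  have set1: "(\<Union>a\<in>carrier G. \<Union>b\<in>carrier G. {a \<otimes> b \<otimes> inv a \<otimes> inv b}) \<subseteq> group_center G"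
  proof (safe)
    fix a b assume ab: "a \<in> carrier G" "b \<in> carrier G"
    have "\<forall>z\<in>carrier G. cm G a b \<otimes> z = z \<otimes> cm G a b" using cl2 ab cm_one_iff by auto
    then show "a \<otimes> b \<otimes> inv a \<otimes> inv b \<in> group_center G" using ab
      by (simp add: group_center_def cm_def)
  qed
  have LC1: "lower_central G (Suc 0) \<subseteq> group_center G"
    using generate_subgroup_incl[OF set1 center_subgroup]
    by (simp add: commutator_subgroup_def)
  have one1: "\<one> \<in> lower_central G (Suc 0)" by (simp add: commutator_subgroup_def generate.one)
  have set2: "(\<Union>a\<in>lower_central G (Suc 0). \<Union>b\<in>carrier G. {a \<otimes> b \<otimes> inv a \<otimes> inv b}) = {\<one>}"
  proof (safe)
    fix a b assume a: "a \<in> lower_central G (Suc 0)" and b: "b \<in> carrier G"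
    have az: "a \<in> group_center G" using a LC1 by auto
    show "a \<otimes> b \<otimes> inv a \<otimes> inv b = \<one>" using cm_center_left[OF b az] by (simp add: cm_def)
  next
    show "\<one> \<in> (\<Union>a\<in>lower_central G (Suc 0). \<Union>b\<in>carrier G. {a \<otimes> b \<otimes> inv a \<otimes> inv b})"
      using one1 by force
  qed
  have "lower_central G (Suc (Suc 0)) = {\<one>}"
    using set2 generate_one by (simp only: lower_central.simps commutator_subgroup_def)
  then show ?thesis unfolding nilpotent_group_def using is_group by blast
qed


lemma modeq_intro:
  fixes x y u v N :: int
  assumes "[x = u] (mod N)" "[y = v] (mod N)" "u = v"
  shows "x mod N = y mod N"
  using assms by (metis cong_def)

definition hmul :: "int \<Rightarrow> int \<times> int \<times> int \<Rightarrow> int \<times> int \<times> int \<Rightarrow> int \<times> int \<times> int" where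
  "hmul N p q = ((fst p + fst q) mod N, (fst (snd p) + fst (snd q)) mod N,
                 (snd (snd p) + snd (snd q) + fst p * fst (snd q)) mod N)"

lemma hmul_simp[simp]: "hmul N (a, b, z) (a', b', z') = ((a + a') mod N, (b + b') mod N, (z + z' + a * b') mod N)"
  by (simp add: hmul_def)

definition hinv :: "int \<Rightarrow> int \<times> int \<times> int \<Rightarrow> int \<times> int \<times> int" where
  "hinv N p = ((- fst p) mod N, (- fst (snd p)) mod N, (fst p * fst (snd p) - snd (snd p)) mod N)"

lemma hinv_simp[simp]: "hinv N (a, b, z) = ((- a) mod N, (- b) mod N, (a * b - z) mod N)"
  by (simp add: hinv_def)

definition hT :: "int \<Rightarrow> (int \<times> int \<times> int) set" where
  "hT N = {(a, b, z). 0 \<le> a \<and> a < N \<and> 0 \<le> b \<and> b < N \<and> 0 \<le> z \<and> z < N}"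

definition heis :: "int \<Rightarrow> nat monoid" where
  "heis N = \<lparr>carrier = to_nat ` hT N, monoid.mult = (\<lambda>x y. to_nat (hmul N (from_nat x) (from_nat y))),
             monoid.one = to_nat ((0::int), (0::int), (0::int))\<rparr>"

context
  fixes N :: int
  assumes Npos: "N > 0"
begin

lemma hT_mem: "(a, b, z) \<in> hT N \<longleftrightarrow> 0 \<le> a \<and> a < N \<and> 0 \<le> b \<and> b < N \<and> 0 \<le> z \<and> z < N"
  by (simp add: hT_def)

lemma hmul_in: "hmul N p q \<in> hT N"
  using Npos by (cases p, cases q) (simp add: hT_def)

lemma hinv_in: "hinv N p \<in> hT N"
  using Npos by (cases p) (simp add: hT_def)

lemma hmul_assoc: "hmul N (hmul N p q) r = hmul N p (hmul N q r)"
proof -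
  obtain a b z where p: "p = (a, b, z)" by (cases p)
  obtain a1 b1 z1 where q: "q = (a1, b1, z1)" by (cases q)
  obtain a2 b2 z2 where r: "r = (a2, b2, z2)" by (cases r)
  have 1: "((a + a1) mod N + a2) mod N = (a + (a1 + a2) mod N) mod N" by (simp add: mod_simps ac_simps)
  have 2: "((b + b1) mod N + b2) mod N = (b + (b1 + b2) mod N) mod N" by (simp add: mod_simps ac_simps)
  have 3: "((z + z1 + a * b1) mod N + z2 + (a + a1) mod N * b2) mod N =
           (z + (z1 + z2 + a1 * b2) mod N + a * ((b1 + b2) mod N)) mod N"
    by (rule modeq_intro[where u = "z + z1 + a * b1 + z2 + (a + a1) * b2" and v = "z + (z1 + z2 + a1 * b2) + a * (b1 + b2)"])
       (intro cong_add cong_mult cong_mod_leftI cong_refl, intro cong_add cong_mult cong_mod_leftI cong_refl,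
        simp add: algebra_simps)
  show ?thesis using 1 2 3 p q r by simp
qed

lemma hmul_one: "p \<in> hT N \<Longrightarrow> hmul N (0, 0, 0) p = p"
  by (cases p) (simp add: hT_def)

lemma hinv_l: "hmul N (hinv N p) p = (0, 0, 0)"
proof -
  obtain a b z where p: "p = (a, b, z)" by (cases p)
  have 1: "((- a) mod N + a) mod N = 0" by (simp add: mod_simps)
  have 2: "((- b) mod N + b) mod N = 0" by (simp add: mod_simps)
  have 3: "((a * b - z) mod N + z + (- a) mod N * b) mod N = 0 mod N"
    by (rule modeq_intro[where u = "a * b - z + z + (- a) * b" and v = 0])
       (intro cong_add cong_mult cong_mod_leftI cong_refl, simp, simp)
  show ?thesis using 1 2 3 p by simp
qed

lemma heis_carrier: "carrier (heis N) = to_nat ` hT N" by (simp add: heis_def)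
lemma heis_mult: "to_nat p \<otimes>\<^bsub>heis N\<^esub> to_nat q = to_nat (hmul N p q)" by (simp add: heis_def)
lemma heis_one: "\<one>\<^bsub>heis N\<^esub> = to_nat ((0::int), (0::int), (0::int))" by (simp add: heis_def)
lemma to_nat_in: "to_nat p \<in> carrier (heis N) \<longleftrightarrow> p \<in> hT N"
  by (simp add: heis_carrier inj_image_mem_iff[OF inj_to_nat])

lemma heis_group: "group (heis N)"
proof (rule groupI)
  fix x y assume "x \<in> carrier (heis N)" "y \<in> carrier (heis N)"
  then obtain p q :: "int \<times> int \<times> int" where "x = to_nat p" "y = to_nat q" unfolding heis_carrier by blast
  then show "x \<otimes>\<^bsub>heis N\<^esub> y \<in> carrier (heis N)" by (simp add: heis_mult to_nat_in hmul_in)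
next
  show "\<one>\<^bsub>heis N\<^esub> \<in> carrier (heis N)" using Npos by (simp add: heis_one to_nat_in hT_def)
next
  fix x y z assume "x \<in> carrier (heis N)" "y \<in> carrier (heis N)" "z \<in> carrier (heis N)"
  then obtain p q r :: "int \<times> int \<times> int" where "x = to_nat p" "y = to_nat q" "z = to_nat r" unfolding heis_carrier by blast
  then show "x \<otimes>\<^bsub>heis N\<^esub> y \<otimes>\<^bsub>heis N\<^esub> z = x \<otimes>\<^bsub>heis N\<^esub> (y \<otimes>\<^bsub>heis N\<^esub> z)"
    by (simp add: heis_mult hmul_assoc)
next
  fix x assume "x \<in> carrier (heis N)"
  then obtain p where p: "x = to_nat p" "p \<in> hT N" unfolding heis_carrier by blast
  then show "\<one>\<^bsub>heis N\<^esub> \<otimes>\<^bsub>heis N\<^esub> x = x" by (simp add: heis_one heis_mult hmul_one)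
next
  fix x assume "x \<in> carrier (heis N)"
  then obtain p where p: "x = to_nat p" "p \<in> hT N" unfolding heis_carrier by blast
  show "\<exists>y\<in>carrier (heis N). y \<otimes>\<^bsub>heis N\<^esub> x = \<one>\<^bsub>heis N\<^esub>"
    by (rule bexI[of _ "to_nat (hinv N p)"]) (simp_all add: p heis_mult hinv_l heis_one to_nat_in hinv_in)
qed

lemma heis_finite: "finite (carrier (heis N))"
proof -
  have "hT N \<subseteq> {0..<N} \<times> {0..<N} \<times> {0..<N}" by (auto simp: hT_def)
  then have "finite (hT N)" using finite_subset by blast
  then show ?thesis by (simp add: heis_carrier)
qed

lemma heis_inv: "p \<in> hT N \<Longrightarrow> inv\<^bsub>heis N\<^esub> (to_nat p) = to_nat (hinv N p)"
  by (rule group.inv_equality[OF heis_group]) (simp_all add: heis_mult hinv_l heis_one to_nat_in hinv_in)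

lemma heis_central: "(0, 0, z) \<in> hT N \<Longrightarrow> to_nat ((0::int), (0::int), z) \<in> group_center (heis N)"
proof -
  assume z: "(0, 0, z) \<in> hT N"
  have "to_nat ((0::int), (0::int), z) \<otimes>\<^bsub>heis N\<^esub> x = x \<otimes>\<^bsub>heis N\<^esub> to_nat ((0::int), (0::int), z)" if xc: "x \<in> carrier (heis N)" for x
  proof -
    obtain p :: "int \<times> int \<times> int" where p0: "x = to_nat p" using xc unfolding heis_carrier by blast
    obtain a b w :: int where "p = (a, b, w)" by (cases p)
    then have p: "x = to_nat (a, b, w)" using p0 by simp
    show ?thesis by (simp add: p heis_mult ac_simps)
  qed
  then show ?thesis using z by (simp add: group_center_def to_nat_in)
qed

lemma heis_cm_central:
  assumes "x \<in> carrier (heis N)" "y \<in> carrier (heis N)"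
  shows "cm (heis N) x y \<in> group_center (heis N)"
proof -
  obtain p where p0: "x = to_nat p" "p \<in> hT N" using assms(1) unfolding heis_carrier by blast
  obtain a b w :: int where "p = (a, b, w)" by (cases p)
  then have x: "x = to_nat (a, b, w)" "(a, b, w) \<in> hT N" using p0 by simp_all
  obtain q where q0: "y = to_nat q" "q \<in> hT N" using assms(2) unfolding heis_carrier by blast
  obtain a1 b1 w1 :: int where "q = (a1, b1, w1)" by (cases q)
  then have y: "y = to_nat (a1, b1, w1)" "(a1, b1, w1) \<in> hT N" using q0 by simp_all
  define R where "R = hmul N (hmul N (hmul N (a, b, w) (a1, b1, w1)) (hinv N (a, b, w))) (hinv N (a1, b1, w1))"
  have cmR: "cm (heis N) x y = to_nat R"
    unfolding cm_def R_def using x y by (simp add: heis_inv heis_mult)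
  have f1: "fst R = 0" unfolding R_def by (simp add: mod_simps)
  have f2: "fst (snd R) = 0" unfolding R_def by (simp add: mod_simps)
  have Rin: "R \<in> hT N" unfolding R_def by (rule hmul_in)
  obtain r1 r2 r3 where R: "R = (r1, r2, r3)" by (cases R)
  have "R = (0, 0, r3)" using R f1 f2 by simp
  then show ?thesis using heis_central Rin cmR by simp
qed

lemma heis_cl2: "\<forall>x\<in>carrier (heis N). \<forall>y\<in>carrier (heis N). \<forall>z\<in>carrier (heis N).
   cm (heis N) (cm (heis N) x y) z = \<one>\<^bsub>heis N\<^esub>"
  using group.cm_center_left[OF heis_group] heis_cm_central by blast

lemma heis_pow:
  assumes "(a, b, 0::int) \<in> hT N" "(a * b) mod N = 0"
  shows "to_nat (a, b, 0::int) [^]\<^bsub>heis N\<^esub> (k::nat) = to_nat ((int k * a) mod N, (int k * b) mod N, 0::int)"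
proof (induct k)
  case 0 then show ?case by (simp add: heis_one)
next
  case (Suc k)
  have "((int k * a) mod N * b) mod N = (int k * (a * b)) mod N" by (simp add: mod_simps ac_simps)
  also have "\<dots> = (int k * ((a * b) mod N)) mod N" by (simp add: mod_mult_right_eq)
  also have "\<dots> = 0" using assms(2) by simp
  finally have 3: "((int k * a) mod N * b) mod N = 0" .
  have 1: "((int k * a) mod N + a) mod N = (int (Suc k) * a) mod N" by (simp add: mod_simps algebra_simps)
  have 2: "((int k * b) mod N + b) mod N = (int (Suc k) * b) mod N" by (simp add: mod_simps algebra_simps)
  show ?case using Suc 1 2 3 by (simp add: heis_mult)
qed

lemma heis_comm_iff:
  "to_nat (a, b, 0::int) \<otimes>\<^bsub>heis N\<^esub> to_nat (a1, b1, 0::int) = to_nat (a1, b1, 0::int) \<otimes>\<^bsub>heis N\<^esub> to_nat (a, b, 0::int)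
   \<longleftrightarrow> (a * b1) mod N = (a1 * b) mod N"
  by (simp add: heis_mult ac_simps inj_eq[OF inj_to_nat])

end

lemma prod_dvd_lemma1:
  fixes q :: "'i \<Rightarrow> int"
  assumes "finite I" "Xs \<subseteq> I" "Y \<subseteq> I" "Xs \<inter> Y = {}"
  shows "prod q I dvd prod q (I - Xs) * prod q (I - Y)"
proof -
  have "prod q I = prod q (I - Xs) * prod q Xs" using prod.subset_diff[OF assms(2,1)] .
  moreover have "prod q Xs dvd prod q (I - Y)" using assms by (intro prod_dvd_prod_subset) auto
  ultimately show ?thesis by (simp add: mult_dvd_mono)
qed

lemma prod_dvd_lemma2:
  fixes q :: "'i \<Rightarrow> int"
  assumes "finite I" "finite S" "Xs \<subseteq> I" "Xs \<subseteq> S"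
  shows "prod q I dvd prod q S * prod q (I - Xs)"
proof -
  have "prod q I = prod q (I - Xs) * prod q Xs" using prod.subset_diff[OF assms(3,1)] .
  moreover have "prod q Xs dvd prod q S" using assms by (intro prod_dvd_prod_subset) auto
  ultimately show ?thesis by (simp add: mult_dvd_mono mult.commute)
qed

lemma prime_not_dvd_prod:
  fixes p :: "'i \<Rightarrow> nat"
  assumes "finite J" "inj_on p I" "\<forall>i\<in>I. Factorial_Ring.prime (p i)" "l \<in> I" "J \<subseteq> I" "l \<notin> J"
  shows "\<not> int (p l) dvd (\<Prod>j\<in>J. int (p j))"
proof
  assume d: "int (p l) dvd (\<Prod>j\<in>J. int (p j))"
  have pl: "Factorial_Ring.prime (int (p l))" using assms by simp
  have "\<exists>j\<in>J. int (p l) dvd int (p j)" using d prime_dvd_prod_iff[OF assms(1) pl, of "\<lambda>j. int (p j)"] by simp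
  then obtain j where j: "j \<in> J" "int (p l) dvd int (p j)" by blast
  have pj: "Factorial_Ring.prime (int (p j))" using assms j by auto
  have "int (p l) = int (p j)" using primes_dvd_imp_eq[OF pl pj j(2)] .
  then have "p l = p j" by simp
  then have "l = j" using inj_onD[OF assms(2) \<open>p l = p j\<close> assms(4)] j assms(5) by blast
  then show False using assms j by blast
qed

lemma coprime_prods:
  fixes p :: "'i \<Rightarrow> nat"
  assumes "finite S" "finite T" "S \<inter> T = {}" "S \<subseteq> I" "T \<subseteq> I" "inj_on p I"
    "\<forall>i\<in>I. Factorial_Ring.prime (p i)"
  shows "coprime (prod p S) (prod p T)"
proof (rule prod_coprime_left)
  fix i assume i: "i \<in> S"
  show "coprime (p i) (prod p T)"
  proof (rule prod_coprime_right)
    fix j assume j: "j \<in> T"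
    have "i \<noteq> j" using i j assms(3) by blast
    then have "p i \<noteq> p j" using inj_onD[OF assms(6) _ _] i j assms(4,5) by blast
    then show "coprime (p i) (p j)" using primes_coprime assms i j by blast
  qed
qed

theorem theorem3p5:
  fixes V :: "'v set" and E :: "'v \<Rightarrow> 'v \<Rightarrow> bool"
  assumes "finite_simple_graph V E"
  shows "\<exists>(G :: nat monoid) f. group G \<and> finite (carrier G) \<and> nilpotent_group G \<and>
           induced_subgraph_embedding V E (carrier G) (deep_commuting_adj G) f"
proof -
  have fin: "finite V" and sym: "\<And>u v. u \<in> V \<Longrightarrow> v \<in> V \<Longrightarrow> E u v \<Longrightarrow> E v u"
    using assms unfolding finite_simple_graph_def by auto
  obtain r where "bij_betw r V {0..<card V}" using ex_bij_betw_finite_nat[OF fin] by blast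
  then have rinj: "inj_on r V" by (simp add: bij_betw_def)
  define NE where "NE = {(u, v). u \<in> V \<and> v \<in> V \<and> u \<noteq> v \<and> \<not> E u v \<and> r u < r v}"
  define Lab :: "('v + 'v \<times> 'v) set" where "Lab = Inl ` V \<union> Inr ` NE"
  have finNE: "finite NE" using fin by (intro finite_subset[of NE "V \<times> V"]) (auto simp: NE_def)
  have finLab: "finite Lab" using fin finNE by (simp add: Lab_def)
  obtain P where P: "finite P" "card P = card Lab" "P \<subseteq> {p::nat. Factorial_Ring.prime p}"
    using infinite_arbitrarily_large[OF primes_infinite] by blast
  obtain p where pb: "bij_betw p Lab P" using finite_same_card_bij[OF finLab P(1) P(2)[symmetric]] by blast
  have pinj: "inj_on p Lab" using pb by (simp add: bij_betw_def)
  have pprime: "\<forall>l\<in>Lab. Factorial_Ring.prime (p l)" using pb P(3) by (auto simp: bij_betw_def)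
  define q where "q l = int (p l)" for l
  define N where "N = prod q Lab"
  have Npos: "N > 0" unfolding N_def q_def using pprime prime_gt_0_nat by (intro prod_pos) auto
  define A where "A u = {l \<in> Lab. l = Inl u \<or> (\<exists>v. l = Inr (u, v))}" for u
  define B where "B u = {l \<in> Lab. \<exists>w. l = Inr (w, u)}" for u
  define av where "av u = prod q (Lab - A u)" for u
  define bv where "bv u = prod q (Lab - B u)" for u
  define mu where "mu u = prod p (A u \<union> B u)" for u
  define f where "f u = to_nat (av u mod N, bv u mod N, 0::int)" for u
  have InrNE: "x \<in> NE" if "Inr x \<in> Lab" for x using that by (auto simp: Lab_def)
  have AL: "A u \<subseteq> Lab" "B u \<subseteq> Lab" for u by (auto simp: A_def B_def)
  have qdvdN: "q l dvd N" if "l \<in> Lab" for l unfolding N_def using finLab that by (rule dvd_prodI)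
  have notdvd: "\<not> q l dvd prod q (Lab - Xs)" if "l \<in> Lab" "l \<in> Xs" for l Xs
    unfolding q_def using prime_not_dvd_prod[of "Lab - Xs" p Lab l] finLab pinj pprime that by auto
  have isdvd: "q l dvd prod q (Lab - Xs)" if "l \<in> Lab" "l \<notin> Xs" for l Xs
    using finLab that by (intro dvd_prodI) auto
  have ABdisj: "A u \<inter> B u = {}" for u
  proof (rule ccontr)
    assume "A u \<inter> B u \<noteq> {}"
    then obtain l where l: "l \<in> A u" "l \<in> B u" by blast
    then obtain w where w: "l = Inr (w, u)" "l \<in> Lab" by (auto simp: B_def)
    then have "(w, u) \<in> NE" using InrNE by simp
    moreover have "w = u" using l w by (auto simp: A_def)
    ultimately show False by (auto simp: NE_def)
  qed
  have inT: "(av u mod N, bv u mod N, 0::int) \<in> hT N" for u using Npos by (simp add: hT_def)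
  have fC: "f u \<in> carrier (heis N)" for u unfolding f_def using to_nat_in[OF Npos] inT by simp
  have prod0: "(av u mod N * (bv u mod N)) mod N = 0" for u
  proof -
    have "N dvd av u * bv u" unfolding N_def av_def bv_def
      using prod_dvd_lemma1[OF finLab AL(1) AL(2) ABdisj] .
    then show ?thesis by (simp add: mod_mult_eq)
  qed
  have fpow: "f u [^]\<^bsub>heis N\<^esub> (mu u) = \<one>\<^bsub>heis N\<^esub>" for u
  proof -
    have imu: "int (mu u) = prod q (A u \<union> B u)" by (simp add: mu_def q_def)
    have finAB: "finite (A u \<union> B u)" using finLab AL finite_subset by (metis finite_Un)
    have 1: "N dvd int (mu u) * av u" unfolding imu N_def av_def
      by (rule prod_dvd_lemma2[OF finLab finAB AL(1)]) auto
    have 2: "N dvd int (mu u) * bv u" unfolding imu N_def bv_def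
      by (rule prod_dvd_lemma2[OF finLab finAB AL(2)]) auto
    have "f u [^]\<^bsub>heis N\<^esub> (mu u) = to_nat ((int (mu u) * (av u mod N)) mod N, (int (mu u) * (bv u mod N)) mod N, 0::int)"
      unfolding f_def by (rule heis_pow[OF Npos inT prod0])
    also have "\<dots> = to_nat ((0::int), (0::int), (0::int))" using 1 2 by (simp add: mod_mult_right_eq)
    finally show ?thesis by (simp add: heis_one[OF Npos])
  qed
  have finj: "f u \<noteq> f v" if uv: "u \<in> V" "v \<in> V" "u \<noteq> v" for u v
  proof
    assume "f u = f v"
    then have e: "av u mod N = av v mod N" unfolding f_def by (simp add: inj_eq[OF inj_to_nat])
    have l: "Inl u \<in> Lab" using uv by (simp add: Lab_def)
    have lA: "Inl u \<in> A u" using l by (simp add: A_def)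
    have lA': "Inl u \<notin> A v" using uv by (simp add: A_def)
    have "av u mod q (Inl u) = av v mod q (Inl u)" using e mod_mod_cancel[OF qdvdN[OF l]] by metis
    moreover have "q (Inl u) dvd av v" unfolding av_def using isdvd l lA' by simp
    ultimately have "q (Inl u) dvd av u" by (simp add: dvd_eq_mod_eq_0)
    then show False using notdvd[OF l lA] unfolding av_def by simp
  qed
  have NC: "(av u mod N * (bv v mod N)) mod N \<noteq> (av v mod N * (bv u mod N)) mod N"
    if uvNE: "(u, v) \<in> NE" for u v
  proof
    assume e0: "(av u mod N * (bv v mod N)) mod N = (av v mod N * (bv u mod N)) mod N"
    have uv: "u \<noteq> v" using uvNE by (simp add: NE_def)
    define l where "l = (Inr (u, v) :: 'v + 'v \<times> 'v)"
    have l: "l \<in> Lab" using uvNE by (simp add: Lab_def l_def)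
    have e: "(av u * bv v) mod N = (av v * bv u) mod N" using e0 by (simp add: mod_mult_eq)
    have e2: "(av u * bv v) mod q l = (av v * bv u) mod q l" using e mod_mod_cancel[OF qdvdN[OF l]] by metis
    have "q l dvd av v" unfolding av_def using isdvd l uv by (simp add: A_def l_def)
    then have "q l dvd av v * bv u" by simp
    then have "q l dvd av u * bv v" using e2 by (simp add: dvd_eq_mod_eq_0)
    moreover have "Factorial_Ring.prime (q l)" using pprime l by (simp add: q_def)
    ultimately have "q l dvd av u \<or> q l dvd bv v" using prime_dvd_mult_iff by blast
    moreover have "\<not> q l dvd av u" unfolding av_def using notdvd l by (simp add: A_def l_def)
    moreover have "\<not> q l dvd bv v" unfolding bv_def using notdvd l by (simp add: B_def l_def)
    ultimately show False by blast
  qed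
  have grp: "group (heis N)" using heis_group[OF Npos] .
  have schur: "\<exists>(H :: nat monoid) \<pi>. schur_cover H (heis N) \<pi>"
    using schur_exists[OF grp heis_finite[OF Npos] heis_cl2[OF Npos]] .
  have edge: "E u v \<longleftrightarrow> deep_commuting_adj (heis N) (f u) (f v)"
    if uv: "u \<in> V" "v \<in> V" "u \<noteq> v" for u v
  proof
    assume Euv: "E u v"
    have Evu: "E v u" using sym uv Euv by blast
    have AuBv: "A u \<inter> B v = {}"
    proof (rule ccontr)
      assume "A u \<inter> B v \<noteq> {}"
      then obtain l where l: "l \<in> A u" "l \<in> B v" by blast
      then obtain w where w: "l = Inr (w, v)" "l \<in> Lab" by (auto simp: B_def)
      then have "(w, v) \<in> NE" using InrNE by simp
      moreover have "w = u" using l w by (auto simp: A_def)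
      ultimately show False using Euv by (auto simp: NE_def)
    qed
    have AvBu: "A v \<inter> B u = {}"
    proof (rule ccontr)
      assume "A v \<inter> B u \<noteq> {}"
      then obtain l where l: "l \<in> A v" "l \<in> B u" by blast
      then obtain w where w: "l = Inr (w, u)" "l \<in> Lab" by (auto simp: B_def)
      then have "(w, u) \<in> NE" using InrNE by simp
      moreover have "w = v" using l w by (auto simp: A_def)
      ultimately show False using Evu by (auto simp: NE_def)
    qed
    have c1: "(av u mod N * (bv v mod N)) mod N = 0"
    proof -
      have "N dvd av u * bv v" unfolding N_def av_def bv_def
        using prod_dvd_lemma1[OF finLab AL(1) AL(2) AuBv] .
      then show ?thesis by (simp add: mod_mult_eq)
    qed
    have c2: "(av v mod N * (bv u mod N)) mod N = 0"
    proof -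
      have "N dvd av v * bv u" unfolding N_def av_def bv_def
        using prod_dvd_lemma1[OF finLab AL(1) AL(2) AvBu] .
      then show ?thesis by (simp add: mod_mult_eq)
    qed
    have comm: "f u \<otimes>\<^bsub>heis N\<^esub> f v = f v \<otimes>\<^bsub>heis N\<^esub> f u"
      unfolding f_def using heis_comm_iff[OF Npos] c1 c2 by simp
    have disj: "(A u \<union> B u) \<inter> (A v \<union> B v) = {}"
    proof -
      have "A u \<inter> A v = {}" using uv by (auto simp: A_def)
      moreover have "B u \<inter> B v = {}" using uv by (auto simp: B_def)
      ultimately show ?thesis using AuBv AvBu by blast
    qed
    have finAB: "finite (A x \<union> B x)" for x using finLab AL finite_subset by (metis finite_Un)
    have cop: "coprime (mu u) (mu v)" unfolding mu_def
      by (rule coprime_prods[OF finAB finAB disj _ _ pinj pprime]) (use AL in auto)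
    show "deep_commuting_adj (heis N) (f u) (f v)"
      by (rule adj[OF grp fC fC finj[OF uv] comm fpow fpow cop])
  next
    assume adjuv: "deep_commuting_adj (heis N) (f u) (f v)"
    show "E u v"
    proof (rule ccontr)
      assume nE: "\<not> E u v"
      have nE': "\<not> E v u" using sym uv nE by blast
      have "r u \<noteq> r v" using inj_onD[OF rinj _ uv(1) uv(2)] uv(3) by blast
      then have "f u \<otimes>\<^bsub>heis N\<^esub> f v \<noteq> f v \<otimes>\<^bsub>heis N\<^esub> f u"
      proof (cases "r u < r v")
        case True
        then have "(u, v) \<in> NE" using uv nE by (simp add: NE_def)
        then show ?thesis using NC heis_comm_iff[OF Npos] unfolding f_def by simp
      next
        case False
        then have "r v < r u" using \<open>r u \<noteq> r v\<close> by simp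
        then have "(v, u) \<in> NE" using uv nE' by (auto simp: NE_def)
        then have "f v \<otimes>\<^bsub>heis N\<^esub> f u \<noteq> f u \<otimes>\<^bsub>heis N\<^esub> f v"
          using NC heis_comm_iff[OF Npos] unfolding f_def by simp
        then show ?thesis by metis
      qed
      then show False using nonadj[OF schur fC fC] adjuv by blast
    qed
  qed
  have emb: "induced_subgraph_embedding V E (carrier (heis N)) (deep_commuting_adj (heis N)) f"
    unfolding induced_subgraph_embedding_def
  proof (intro conjI)
    show "inj_on f V" using finj by (auto simp: inj_on_def)
    show "f ` V \<subseteq> carrier (heis N)" using fC by auto
    show "\<forall>u\<in>V. \<forall>v\<in>V. u \<noteq> v \<longrightarrow> E u v = deep_commuting_adj (heis N) (f u) (f v)"
      using edge by blast
  qed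
  show ?thesis
    using grp heis_finite[OF Npos] group.class2_nilpotent[OF grp heis_cl2[OF Npos]] emb by blast
qed

end
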